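(* Let $\rho$, $\sigma$, $\tau$ be non-crossing partitions of sizes $k$, $\ell$, $m$ respectively. Let $I=(i(1),\dots,i(k))$ be a leftmost occurrence of $\rho$ in $\tau$, let $J=(j(1),\dots,j(\ell))$ be a topmost occurrence of $\sigma$ in $\tau$, and let $H=(h(1),\dots,h(k+\ell))$ be any occurrence of $\rho[\sigma]$ in $\tau$. Then both $(i(1),\dots,i(k),h(k+1),\dots,h(k+\ell))$ and $(h(1),\dots,h(k),j(1),\dots,j(\ell))$ are occurrences of $\rho[\sigma]$ in $\tau$. In particular, $\tau$ contains $\rho[\sigma]$ if and only if $(i(1),\dots,i(k),j(1),\dots,j(\ell))$ is an occurrence of $\rho[\sigma]$ in $\tau$.
   Context: Set partitions are written in canonical sequential form (restricted growth words: $\pi_1=1$, $\pi_{i+1}\le\max(\pi_1,\dots,\pi_i)+1$, $\pi_j$ = index of the block of $j$, blocks ordered by minima). A partition is non-crossing if it avoids $1212$, i.e. has no indices $i<j<k<l$ with $\pi_i=\pi_k<\pi_j=\pi_l$. For partitions $\rho,\sigma$, $\rho[\sigma]$ denotes the concatenation of $\rho$ with $\sigma+r$, where $r$ is the number of blocks of $\rho$ and $\sigma+r$ adds $r$ to every letter. An occurrence of $\sigma=\sigma_1\cdots\sigma_k$ in $\tau=\tau_1\cdots\tau_n$ is a sequence $1\le i(1)<\dots<i(k)\le n$ with $\tau_{i(1)}\cdots\tau_{i(k)}$ order-isomorphic to $\sigma$. It is leftmost if $i(k)$ is minimal among all occurrences, and topmost if $\tau_{i(1)}$ is maximal among all occurrences.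 If $\sigma$ is empty, the empty sequence is its unique occurrence, both leftmost and topmost. *)

theory Defs
  imports Main
begin

text \<open>Words are lists of naturals; positions are 0-based list indices
 (position p in the list corresponds to index p+1 in the paper).\<close>

definition set_partition :: "nat list \<Rightarrow> bool" where
  "set_partition w \<longleftrightarrow>
     (\<forall>x\<in>set w. 1 \<le> x) \<and>
     (w \<noteq> [] \<longrightarrow> w ! 0 = 1) \<and>
     (\<forall>i. Suc i < length w \<longrightarrow> w ! Suc i \<le> Max (set (take (Suc i) w)) + 1)"

definition noncrossing :: "nat list \<Rightarrow> bool" where
  "noncrossing w \<longleftrightarrow>
     \<not> (\<exists>i j k l. i < j \<and> j < k \<and> k < l \<and> l < length w \<and>
            w ! i = w ! k \<and> w ! k < w ! j \<and> w ! j = w ! l)"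

definition num_blocks :: "nat list \<Rightarrow> nat" where
  "num_blocks w = (if w = [] then 0 else Max (set w))"

definition pconcat :: "nat list \<Rightarrow> nat list \<Rightarrow> nat list" where
  "pconcat \<rho> \<sigma> = \<rho> @ map (\<lambda>x. x + num_blocks \<rho>) \<sigma>"

definition order_iso :: "nat list \<Rightarrow> nat list \<Rightarrow> bool" where
  "order_iso u v \<longleftrightarrow> length u = length v \<and>
     (\<forall>a < length u. \<forall>b < length u. (u ! a \<le> u ! b \<longleftrightarrow> v ! a \<le> v ! b))"

definition occurrence :: "nat list \<Rightarrow> nat list \<Rightarrow> nat list \<Rightarrow> bool" where
  "occurrence \<sigma> \<tau> I \<longleftrightarrow> length I = length \<sigma> \<and> sorted_wrt (<) I \<and>
     (\<forall>i\<in>set I. i < length \<tau>) \<and> order_iso (map (\<lambda>i. \<tau> ! i) I) \<sigma>"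

definition leftmost_occurrence :: "nat list \<Rightarrow> nat list \<Rightarrow> nat list \<Rightarrow> bool" where
  "leftmost_occurrence \<sigma> \<tau> I \<longleftrightarrow> occurrence \<sigma> \<tau> I \<and>
     (I \<noteq> [] \<longrightarrow> (\<forall>I'. occurrence \<sigma> \<tau> I' \<longrightarrow> last I \<le> last I'))"

definition topmost_occurrence :: "nat list \<Rightarrow> nat list \<Rightarrow> nat list \<Rightarrow> bool" where
  "topmost_occurrence \<sigma> \<tau> J \<longleftrightarrow> occurrence \<sigma> \<tau> J \<and>
     (J \<noteq> [] \<longrightarrow> (\<forall>J'. occurrence \<sigma> \<tau> J' \<longrightarrow> \<tau> ! hd J' \<le> \<tau> ! hd J))"

end

theory Submission
  imports Defs
begin

lemma sp_vals: "set_partition w \<Longrightarrow> x \<in> set w \<Longrightarrow> 1 \<le> x"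
  unfolding set_partition_def by auto

lemma sp_prefix:
  assumes sp: "set_partition w"
  shows "n \<le> length w \<Longrightarrow> v \<in> set (take n w) \<Longrightarrow> 1 \<le> u \<Longrightarrow> u \<le> v \<Longrightarrow> u \<in> set (take n w)"
proof (induction n arbitrary: v u)
  case 0 then show ?case by simp
next
  case (Suc n)
  have tk: "take (Suc n) w = take n w @ [w ! n]"
    using Suc.prems(1) by (simp add: take_Suc_conv_app_nth)
  show ?case
  proof (cases "v \<in> set (take n w)")
    case True
    then show ?thesis using Suc by (simp add: tk)
  next
    case False
    then have v: "v = w ! n" using Suc.prems(2) tk by simp
    show ?thesis
    proof (cases "u = v")
      case True then show ?thesis using v tk by simp
    next
      case False
      show ?thesis
      proof (cases n)
        case 0
        then have "w ! 0 = 1" using sp Suc.prems(1) unfolding set_partition_def by auto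
        then show ?thesis using 0 v Suc.prems False by simp
      next
        case (Suc m)
        have le: "w ! n \<le> Max (set (take n w)) + 1"
          using sp \<open>Suc n \<le> length w\<close> Suc unfolding set_partition_def by auto
        have ne: "set (take n w) \<noteq> {}" using Suc \<open>Suc n \<le> length w\<close> by auto
        have M: "Max (set (take n w)) \<in> set (take n w)" using ne by simp
        have "u \<le> Max (set (take n w))" using le v False \<open>u \<le> v\<close> by simp
        then have "u \<in> set (take n w)" using Suc.IH[OF _ M] \<open>Suc n \<le> length w\<close> \<open>1 \<le> u\<close> by simp
        then show ?thesis by (simp add: tk)
      qed
    qed
  qed
qed

lemma sp_L:
  assumes "set_partition w" "p < length w" "1 \<le> u" "u \<le> w ! p"
  shows "\<exists>i\<le>p. w ! i = u"
proof -
  have "w ! p \<in> set (take (Suc p) w)" using assms(2)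
    by (simp add: take_Suc_conv_app_nth)
  then have "u \<in> set (take (Suc p) w)"
    using sp_prefix[OF assms(1)] assms by simp
  then obtain i where "i < length (take (Suc p) w)" "take (Suc p) w ! i = u"
    by (auto simp: in_set_conv_nth)
  then show ?thesis by (intro exI[of _ i]) auto
qed

lemma crossC:
  assumes sp: "set_partition w" and nc: "noncrossing w"
    and fh: "f < h" and hb: "h < b" and bl: "b < length w" and lt: "w ! h < w ! b"
    and fb: "w ! f = w ! b"
  shows False
proof -
  have hl: "h < length w" using hb bl by simp
  have fl: "f < length w" using fh hl by simp
  have "w ! h \<in> set w" using hl by simp
  then have h1: "1 \<le> w ! h" using sp_vals[OF sp] by blast
  have "w ! h \<le> w ! f" using lt fb by simp
  then obtain i where i: "i \<le> f" "w ! i = w ! h"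
    using sp_L[OF sp fl h1] by blast
  have "i \<noteq> f" using i lt fb by auto
  then have "i < f" using i by simp
  moreover have "\<not> (i < f \<and> f < h \<and> h < b \<and> b < length w \<and>
            w ! i = w ! h \<and> w ! h < w ! f \<and> w ! f = w ! b)"
    using nc unfolding noncrossing_def by blast
  ultimately show False using fh hb bl i lt fb by simp
qed

lemma order_iso_append:
  assumes len: "length u1 = length v1" and cr: "\<forall>x\<in>set v1. \<forall>y\<in>set v2. x < y"
  shows "order_iso (u1 @ u2) (v1 @ v2) \<longleftrightarrow>
     order_iso u1 v1 \<and> order_iso u2 v2 \<and> (\<forall>x\<in>set u1. \<forall>y\<in>set u2. x < y)"
proof
  assume o: "order_iso (u1 @ u2) (v1 @ v2)"
  have l2: "length u2 = length v2" using o len unfolding order_iso_def by simp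
  have A: "\<forall>a<length (u1@u2). \<forall>b<length (u1@u2).
      ((u1@u2) ! a \<le> (u1@u2) ! b \<longleftrightarrow> (v1@v2) ! a \<le> (v1@v2) ! b)"
    using o unfolding order_iso_def by simp
  have 1: "order_iso u1 v1" unfolding order_iso_def
  proof (intro conjI allI impI len)
    fix a b assume "a < length u1" "b < length u1"
    then show "(u1 ! a \<le> u1 ! b) = (v1 ! a \<le> v1 ! b)"
      using A[rule_format, of a b] len by (simp add: nth_append)
  qed
  have 2: "order_iso u2 v2" unfolding order_iso_def
  proof (intro conjI allI impI l2)
    fix a b assume "a < length u2" "b < length u2"
    then show "(u2 ! a \<le> u2 ! b) = (v2 ! a \<le> v2 ! b)"
      using A[rule_format, of "length u1 + a" "length u1 + b"] len by (simp add: nth_append)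
  qed
  have 3: "\<forall>x\<in>set u1. \<forall>y\<in>set u2. x < y"
  proof (intro ballI)
    fix x y assume "x \<in> set u1" "y \<in> set u2"
    then obtain a b where ab: "a < length u1" "x = u1 ! a" "b < length u2" "y = u2 ! b"
      by (auto simp: in_set_conv_nth)
    have "v1 ! a < v2 ! b" using cr ab len l2 by auto
    then show "x < y"
      using A[rule_format, of "length u1 + b" a] ab len by (auto simp: nth_append)
  qed
  show "order_iso u1 v1 \<and> order_iso u2 v2 \<and> (\<forall>x\<in>set u1. \<forall>y\<in>set u2. x < y)"
    using 1 2 3 by blast
next
  assume H: "order_iso u1 v1 \<and> order_iso u2 v2 \<and> (\<forall>x\<in>set u1. \<forall>y\<in>set u2. x < y)"
  have l2: "length u2 = length v2" using H unfolding order_iso_def by simp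
  show "order_iso (u1 @ u2) (v1 @ v2)" unfolding order_iso_def
  proof (intro conjI allI impI)
    show "length (u1 @ u2) = length (v1 @ v2)" using len l2 by simp
  next
    fix a b assume a: "a < length (u1 @ u2)" and b: "b < length (u1 @ u2)"
    have i1: "\<forall>a<length u1. \<forall>b<length u1. (u1 ! a \<le> u1 ! b) = (v1 ! a \<le> v1 ! b)"
      and i2: "\<forall>a<length u2. \<forall>b<length u2. (u2 ! a \<le> u2 ! b) = (v2 ! a \<le> v2 ! b)"
      using H unfolding order_iso_def by auto
    have c1: "\<And>a b. a < length u1 \<Longrightarrow> b < length u2 \<Longrightarrow> u1 ! a < u2 ! b \<and> v1 ! a < v2 ! b"
      using H cr len l2 by auto
    show "((u1 @ u2) ! a \<le> (u1 @ u2) ! b) = ((v1 @ v2) ! a \<le> (v1 @ v2) ! b)"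
    proof (cases "a < length u1"; cases "b < length u1")
      assume "a < length u1" "b < length u1" then show ?thesis using i1 len by (simp add: nth_append)
    next
      assume x: "a < length u1" "\<not> b < length u1"
      have "b - length u1 < length u2" using b x by simp
      from c1[OF x(1) this] show ?thesis using x len by (auto simp: nth_append)
    next
      assume x: "\<not> a < length u1" "b < length u1"
      have "a - length u1 < length u2" using a x by simp
      from c1[OF x(2) this] show ?thesis using x len by (auto simp: nth_append)
    next
      assume x: "\<not> a < length u1" "\<not> b < length u1"
      then show ?thesis using i2[rule_format, of "a - length u1" "b - length u1"] a b len
        by (auto simp: nth_append)
    qed
  qed
qed

lemma order_iso_shift: "order_iso u (map (\<lambda>x. x + r) v) \<longleftrightarrow> order_iso u v"
  unfolding order_iso_def by auto

lemma occ_concat: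
  assumes r: "\<forall>x\<in>set \<rho>. x \<le> num_blocks \<rho>" and s: "\<forall>x\<in>set \<sigma>. 1 \<le> x"
    and len: "length A = length \<rho>"
  shows "occurrence (pconcat \<rho> \<sigma>) \<tau> (A @ B) \<longleftrightarrow>
     occurrence \<rho> \<tau> A \<and> occurrence \<sigma> \<tau> B \<and> (\<forall>a\<in>set A. \<forall>b\<in>set B. a < b \<and> \<tau> ! a < \<tau> ! b)"
proof -
  have cr: "\<forall>x\<in>set \<rho>. \<forall>y\<in>set (map (\<lambda>x. x + num_blocks \<rho>) \<sigma>). x < y"
    using r s by fastforce
  have oi: "order_iso (map ((!) \<tau>) A @ map ((!) \<tau>) B) (\<rho> @ map (\<lambda>x. x + num_blocks \<rho>) \<sigma>)
     \<longleftrightarrow> order_iso (map ((!) \<tau>) A) \<rho> \<and> order_iso (map ((!) \<tau>) B) \<sigma>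
         \<and> (\<forall>a\<in>set A. \<forall>b\<in>set B. \<tau> ! a < \<tau> ! b)"
    using order_iso_append[OF _ cr, of "map ((!) \<tau>) A" "map ((!) \<tau>) B"] len order_iso_shift
    by auto
  show ?thesis
    unfolding occurrence_def pconcat_def
    using oi len by (auto simp: sorted_wrt_append)
qed

lemma sorted_le_last: "sorted_wrt (<) xs \<Longrightarrow> x \<in> set xs \<Longrightarrow> x \<le> (last xs :: nat)"
proof -
  assume s: "sorted_wrt (<) xs" and x: "x \<in> set xs"
  then have ne: "xs \<noteq> []" by auto
  have "xs = butlast xs @ [last xs]" using ne by simp
  then have "sorted_wrt (<) (butlast xs @ [last xs])" using s by metis
  then have "\<forall>y\<in>set (butlast xs). y < last xs" by (simp add: sorted_wrt_append)
  moreover have "x \<in> set (butlast xs) \<or> x = last xs"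
    using x \<open>xs = butlast xs @ [last xs]\<close> by (metis Un_iff empty_iff empty_set set_ConsD set_append)
  ultimately show ?thesis by auto
qed

theorem lemma3p1:
  fixes \<rho> \<sigma> \<tau> I J :: "nat list"
  assumes "set_partition \<rho>" "noncrossing \<rho>"
      and "set_partition \<sigma>" "noncrossing \<sigma>"
      and "set_partition \<tau>" "noncrossing \<tau>"
      and "leftmost_occurrence \<rho> \<tau> I"
      and "topmost_occurrence \<sigma> \<tau> J"
  shows "(\<forall>H. occurrence (pconcat \<rho> \<sigma>) \<tau> H \<longrightarrow>
            occurrence (pconcat \<rho> \<sigma>) \<tau> (I @ drop (length \<rho>) H) \<and>
            occurrence (pconcat \<rho> \<sigma>) \<tau> (take (length \<rho>) H @ J))
       \<and> ((\<exists>H. occurrence (pconcat \<rho> \<sigma>) \<tau> H) \<longleftrightarrow> occurrence (pconcat \<rho> \<sigma>) \<tau> (I @ J))"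
proof -
  define k where "k = length \<rho>"
  have occI: "occurrence \<rho> \<tau> I" and lmI: "I \<noteq> [] \<Longrightarrow> occurrence \<rho> \<tau> I' \<Longrightarrow> last I \<le> last I'" for I'
    using assms(7) unfolding leftmost_occurrence_def by auto
  have occJ: "occurrence \<sigma> \<tau> J" and tmJ: "J \<noteq> [] \<Longrightarrow> occurrence \<sigma> \<tau> J' \<Longrightarrow> \<tau> ! hd J' \<le> \<tau> ! hd J" for J'
    using assms(8) unfolding topmost_occurrence_def by auto
  have rle: "\<forall>x\<in>set \<rho>. x \<le> num_blocks \<rho>" unfolding num_blocks_def by auto
  have sge: "\<forall>x\<in>set \<sigma>. 1 \<le> x" using sp_vals[OF assms(3)] by auto
  have lenI: "length I = k" using occI unfolding occurrence_def k_def by simp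
  have lenJ: "length J = length \<sigma>" using occJ unfolding occurrence_def by simp
  have tv: "\<And>x. x < length \<tau> \<Longrightarrow> 1 \<le> \<tau> ! x" using sp_vals[OF assms(5)] by auto
  have P1: "\<forall>H. occurrence (pconcat \<rho> \<sigma>) \<tau> H \<longrightarrow>
            occurrence (pconcat \<rho> \<sigma>) \<tau> (I @ drop k H) \<and>
            occurrence (pconcat \<rho> \<sigma>) \<tau> (take k H @ J)"
  proof (intro allI impI)
    fix H assume oH: "occurrence (pconcat \<rho> \<sigma>) \<tau> H"
    define H1 H2 where "H1 = take k H" and "H2 = drop k H"
    have lenH: "length H = k + length \<sigma>"
      using oH unfolding occurrence_def pconcat_def k_def by simp
    have HH: "H = H1 @ H2" and lH1: "length H1 = k" using lenH unfolding H1_def H2_def by auto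
    have oHs: "occurrence \<rho> \<tau> H1" "occurrence \<sigma> \<tau> H2"
      and crH: "\<forall>a\<in>set H1. \<forall>b\<in>set H2. a < b \<and> \<tau> ! a < \<tau> ! b"
      using occ_concat[OF rle sge, of H1 \<tau> H2] oH HH lH1 k_def by auto
    have H2lt: "\<forall>b\<in>set H2. b < length \<tau>" using oHs(2) unfolding occurrence_def by simp
    have H1lt: "\<forall>b\<in>set H1. b < length \<tau>" using oHs(1) unfolding occurrence_def by simp
    have Ilt: "\<forall>b\<in>set I. b < length \<tau>" using occI unfolding occurrence_def by simp
    have Jlt: "\<forall>b\<in>set J. b < length \<tau>" using occJ unfolding occurrence_def by simp
    have crI: "\<forall>a\<in>set I. \<forall>b\<in>set H2. a < b \<and> \<tau> ! a < \<tau> ! b"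
    proof (intro ballI)
      fix a b assume a: "a \<in> set I" and b: "b \<in> set H2"
      have Ine: "I \<noteq> []" using a by auto
      then have H1ne: "H1 \<noteq> []" using lenI lH1 by auto
      define h where "h = last H1"
      have hin: "h \<in> set H1" using H1ne h_def by simp
      have "a \<le> last I" using sorted_le_last a occI unfolding occurrence_def by blast
      moreover have "last I \<le> h" using lmI[OF Ine oHs(1)] h_def by simp
      ultimately have ah: "a \<le> h" by simp
      have hb: "h < b" "\<tau> ! h < \<tau> ! b" using crH hin b by auto
      have "\<tau> ! a < \<tau> ! b"
      proof (rule ccontr)
        assume "\<not> \<tau> ! a < \<tau> ! b"
        then obtain f where f: "f \<le> a" "\<tau> ! f = \<tau> ! b"
          using sp_L[OF assms(5), of a "\<tau> ! b"] tv H2lt Ilt a b by force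
        have "f \<noteq> h" using f hb by auto
        then have "f < h" using f ah by simp
        then show False using crossC[OF assms(5,6)] hb f H2lt b by blast
      qed
      then show "a < b \<and> \<tau> ! a < \<tau> ! b" using ah hb by simp
    qed
    show "occurrence (pconcat \<rho> \<sigma>) \<tau> (I @ drop k H) \<and>
          occurrence (pconcat \<rho> \<sigma>) \<tau> (take k H @ J)"
    proof
      show "occurrence (pconcat \<rho> \<sigma>) \<tau> (I @ drop k H)"
        using occ_concat[OF rle sge, of I \<tau> H2] occI oHs crI lenI k_def H2_def by auto
    next
      have crJ: "\<forall>a\<in>set H1. \<forall>j\<in>set J. a < j \<and> \<tau> ! a < \<tau> ! j"
      proof (intro ballI)
        fix a j assume a: "a \<in> set H1" and j: "j \<in> set J"
        have Jne: "J \<noteq> []" using j by auto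
        have H2ne: "H2 \<noteq> []" using Jne lenJ oHs(2) unfolding occurrence_def by auto
        define b where "b = hd H2"
        have bin: "b \<in> set H2" using H2ne b_def by simp
        obtain x where x: "x < length J" "j = J ! x" using j by (auto simp: in_set_conv_nth)
        have oiJ: "order_iso (map ((!) \<tau>) J) \<sigma>" using occJ unfolding occurrence_def by simp
        have s0: "\<sigma> ! 0 = 1" using assms(3) Jne lenJ unfolding set_partition_def by auto
        have "\<sigma> ! 0 \<le> \<sigma> ! x" using s0 sge x lenJ by (simp)
        then have "\<tau> ! (J ! 0) \<le> \<tau> ! (J ! x)"
          using oiJ x lenJ unfolding order_iso_def by (metis length_map gr_zeroI less_nat_zero_code nth_map)
        then have "\<tau> ! hd J \<le> \<tau> ! j" using x Jne by (simp add: hd_conv_nth)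
        moreover have "\<tau> ! b \<le> \<tau> ! hd J" using tmJ[OF Jne oHs(2)] b_def by simp
        moreover have ab: "a < b" "\<tau> ! a < \<tau> ! b" using crH a bin by auto
        ultimately have vj: "\<tau> ! a < \<tau> ! j" "\<tau> ! b \<le> \<tau> ! j" by auto
        have "a < j"
        proof (rule ccontr)
          assume "\<not> a < j"
          then have "j < a" using vj by (cases "j = a") auto
          obtain f where f: "f \<le> j" "\<tau> ! f = \<tau> ! b"
            using sp_L[OF assms(5), of j "\<tau> ! b"] tv H2lt Jlt j bin vj by force
          then show False using crossC[OF assms(5,6), of f a b] \<open>j < a\<close> ab H2lt bin by force
        qed
        then show "a < j \<and> \<tau> ! a < \<tau> ! j" using vj by simp
      qed
      show "occurrence (pconcat \<rho> \<sigma>) \<tau> (take k H @ J)"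
        using occ_concat[OF rle sge, of H1 \<tau> J] occJ oHs crJ lH1 k_def H1_def by auto
    qed
  qed
  have P2: "(\<exists>H. occurrence (pconcat \<rho> \<sigma>) \<tau> H) \<longleftrightarrow> occurrence (pconcat \<rho> \<sigma>) \<tau> (I @ J)"
  proof
    assume "\<exists>H. occurrence (pconcat \<rho> \<sigma>) \<tau> H"
    then obtain H where "occurrence (pconcat \<rho> \<sigma>) \<tau> H" by blast
    then have "occurrence (pconcat \<rho> \<sigma>) \<tau> (I @ drop k H)" using P1 by blast
    then have "occurrence (pconcat \<rho> \<sigma>) \<tau> (take k (I @ drop k H) @ J)" using P1 by blast
    then show "occurrence (pconcat \<rho> \<sigma>) \<tau> (I @ J)" using lenI by simp
  qed blast
  show ?thesis using P1 P2 k_def by simp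
qed

end
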